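(* Let $x$ be a random vector in $\mathbb{R}^d$ and $g:\mathbb{R}^d\to[0,\infty)$ be a nonnegative lower semicontinuous function. Assume that \[\mathbb{E}[\|x\|^2]\le\beta_c\quad\text{and}\quad\mathbb{E}\Big[\frac{g(x)}{1+\|x\|^n}\Big]\le\alpha_c\] for some integer $n\ge1$ and positive numbers $\alpha_c,\beta_c$. Then \[\mathbb{E}\Big[g(x)^{\frac{1}{2\lceil n/2\rceil}}\Big]\le\big(1+\sqrt{\beta_c}\big)(2\alpha_c)^{\frac{1}{2\lceil n/2\rceil}}.\]
   Context: $\|\cdot\|$ is the Euclidean norm and $\lceil\cdot\rceil$ the ceiling function. *)

theory Defs
  imports "HOL-Analysis.Analysis" "HOL-Probability.Probability"
begin

definition lower_semicontinuous :: "('a::topological_space \<Rightarrow> real) \<Rightarrow> bool" where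
  "lower_semicontinuous g \<longleftrightarrow> (\<forall>t::real. open {y. t < g y})"

end

theory Submission
  imports Defs
begin

lemma bern:
  fixes u p :: real
  assumes "0 \<le> u" "0 < p" "p \<le> 1"
  shows "u powr p \<le> p*u + (1-p)"
proof (cases "u = 0")
  case True then show ?thesis using assms by simp
next
  case False
  then have "u powr p * 1 powr (1-p) \<le> p*u + (1-p)*1"
    using assms by (intro Youngs_inequality_0) auto
  then show ?thesis by simp
qed

lemma root_pow:
  fixes M :: real
  assumes "M > 0" "k > 0"
  shows "(M^k) powr (1/real k) = M"
  using assms by (simp add: powr_realpow[symmetric] powr_powr)

lemma pointwise:
  fixes G r a sb :: real and n k :: nat
  assumes "G \<ge> 0" "r \<ge> 0" "n \<le> k" "k \<ge> 2" "a > 0" "sb > 0"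
  defines "p \<equiv> 1 / real k"
  shows "G powr p \<le> (2*a) powr p * ((p + p* sb) * (G/(1+r^n)/a) + (1 - p + (1-2*p)* sb/2) + r^2/(2* sb))"
proof -
  define N where "N = 1 + r^n"
  define u where "u = G/N/a"
  have N1: "N \<ge> 1" using assms by (simp add: N_def)
  have u0: "u \<ge> 0" using assms N1 by (simp add: u_def)
  have p0: "p > 0" "2*p \<le> 1" using assms by (auto simp: p_def field_simps)
  have G: "G = (a * u) * N" using N1 assms by (simp add: u_def)
  define M where "M = max 1 r"
  have M1: "M \<ge> 1" by (simp add: M_def)
  have "r^n \<le> M^n" using assms by (intro power_mono) (auto simp: M_def)
  also have "\<dots> \<le> M^k" using M1 assms by (intro power_increasing) auto
  finally have "N \<le> 2 * M^k" using M1 by (simp add: N_def) (smt (verit) one_le_power)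
  then have "N powr p \<le> (2 * M^k) powr p" using N1 p0 by (intro powr_mono2) auto
  also have "\<dots> = 2 powr p * M" using M1 assms
    by (simp add: powr_mult p_def root_pow)
  also have "\<dots> \<le> 2 powr p * (1 + r)" using assms by (simp add: M_def)
  finally have NP: "N powr p \<le> 2 powr p * (1 + r)" .
  have "G powr p = a powr p * u powr p * N powr p"
    using G u0 assms N1 by (simp add: powr_mult)
  also have "\<dots> \<le> a powr p * u powr p * (2 powr p * (1 + r))"
    using NP by (intro mult_left_mono) auto
  also have "\<dots> = (2*a) powr p * (u powr p + u powr p * r)"
    using assms by (simp add: powr_mult algebra_simps)
  finally have A: "G powr p \<le> (2*a) powr p * (u powr p + u powr p * r)" .
  have B1: "u powr p \<le> p*u + (1-p)" using bern[OF u0 p0(1)] p0 by simp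
  have sq: "u powr p * r \<le> ((u powr p)^2 * sb + r^2/sb)/2"
  proof -
    have "0 \<le> (u powr p * sb - r)^2" by simp
    then have "2 * (u powr p * r) * sb \<le> (u powr p)^2 * sb * sb + r^2"
      by (simp add: power2_eq_square algebra_simps)
    then show ?thesis using assms by (simp add: field_simps power2_eq_square)
  qed
  have "(u powr p)^2 = u powr (2*p)" using u0
    by (simp add: powr_realpow[symmetric] powr_powr power2_eq_square powr_add[symmetric])
  also have "\<dots> \<le> 2*p*u + (1-2*p)" using bern[OF u0, of "2*p"] p0 by simp
  finally have B2: "u powr p * r \<le> ((2*p*u + (1-2*p)) * sb + r^2/sb)/2"
    using sq assms by (smt (verit) divide_right_mono mult_right_mono)
  have "u powr p + u powr p * r \<le> (p + p* sb) * u + (1 - p + (1-2*p)* sb/2) + r^2/(2* sb)"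
    using B1 B2 by (simp add: field_simps)
  then show ?thesis using A by (smt (verit) mult_left_mono powr_ge_zero u_def N_def)
qed

lemma lsc_borel:
  fixes g :: "'a::topological_space \<Rightarrow> real"
  assumes "lower_semicontinuous g"
  shows "g \<in> borel_measurable borel"
  unfolding borel_measurable_iff_greater
  using assms by (auto simp: lower_semicontinuous_def)

theorem lemma4p4:
  fixes M :: "'s measure"
    and x :: "'s \<Rightarrow> real ^ 'd"
    and g :: "real ^ 'd \<Rightarrow> real"
    and n :: nat
    and \<alpha>c \<beta>c :: real
  assumes "prob_space M"
    and "x \<in> borel_measurable M"
    and "\<And>y. g y \<ge> 0"
    and "lower_semicontinuous g"
    and "n \<ge> 1"
    and "\<alpha>c > 0" and "\<beta>c > 0"
    and "(\<integral>\<^sup>+ \<omega>. ennreal (norm (x \<omega>) ^ 2) \<partial>M) \<le> ennreal \<beta>c"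
    and "(\<integral>\<^sup>+ \<omega>. ennreal (g (x \<omega>) / (1 + norm (x \<omega>) ^ n)) \<partial>M) \<le> ennreal \<alpha>c"
  shows "(\<integral>\<^sup>+ \<omega>. ennreal (g (x \<omega>) powr (1 / (2 * real_of_int \<lceil>real n / 2\<rceil>))) \<partial>M)
           \<le> ennreal ((1 + sqrt \<beta>c) * (2 * \<alpha>c) powr (1 / (2 * real_of_int \<lceil>real n / 2\<rceil>)))"
proof -
  interpret P: prob_space M by fact
  define k where "k = nat (2 * \<lceil>real n / 2\<rceil>)"
  have kK: "2 * real_of_int \<lceil>real n / 2\<rceil> = real k"
    using assms(5) by (simp add: k_def)
  have nk: "n \<le> k"
  proof -
    have "real n \<le> 2 * real_of_int \<lceil>real n / 2\<rceil>"
      using le_of_int_ceiling[of "real n / 2"] by linarith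
    then show ?thesis using kK by linarith
  qed
  have k2: "k \<ge> 2"
  proof -
    have "\<lceil>real n / 2\<rceil> \<ge> 1" using assms(5) by (simp add: one_le_ceiling)
    then show ?thesis unfolding k_def by linarith
  qed
  define p where "p = 1 / real k"
  define s where "s = sqrt \<beta>c"
  have s0: "s > 0" using assms by (simp add: s_def)
  have p0: "p > 0" "2 * p \<le> 1" using k2 by (auto simp: p_def field_simps)
  define c where "c = (2 * \<alpha>c) powr p"
  define A where "A = p + p * s"
  define B where "B = 1 - p + (1 - 2 * p) * s / 2"
  define C where "C = 1 / (2 * s)"
  have ABC: "A \<ge> 0" "B \<ge> 0" "C \<ge> 0" "c \<ge> 0"
    using p0 s0 by (auto simp: A_def B_def C_def c_def)
  define F where "F = (\<lambda>\<omega>. g (x \<omega>) / (1 + norm (x \<omega>) ^ n))"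
  define R where "R = (\<lambda>\<omega>. norm (x \<omega>) ^ 2)"
  have gm: "g \<in> borel_measurable borel" using lsc_borel assms(4) by blast
  have gxm: "(\<lambda>\<omega>. g (x \<omega>)) \<in> borel_measurable M"
    using measurable_compose[OF assms(2) gm] by simp
  have Fm: "F \<in> borel_measurable M" unfolding F_def using gxm assms(2) by measurable
  have Rm: "R \<in> borel_measurable M" unfolding R_def using assms(2) by measurable
  have F0: "F \<omega> \<ge> 0" for \<omega> using assms(3) by (simp add: F_def)
  have R0: "R \<omega> \<ge> 0" for \<omega> by (simp add: R_def)
  have "(\<integral>\<^sup>+ \<omega>. ennreal (g (x \<omega>) powr p) \<partial>M)
      \<le> (\<integral>\<^sup>+ \<omega>. ennreal c * ((ennreal A * ennreal (F \<omega> / \<alpha>c) + ennreal B) + ennreal C * ennreal (R \<omega>)) \<partial>M)"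
  proof (rule nn_integral_mono)
    fix \<omega>
    have "g (x \<omega>) powr p \<le> c * (A * (F \<omega> / \<alpha>c) + B + C * R \<omega>)"
      using pointwise[OF assms(3) norm_ge_zero nk k2 assms(6) s0, of "x \<omega>"]
      by (simp add: c_def A_def B_def C_def F_def R_def p_def)
    then have "ennreal (g (x \<omega>) powr p) \<le> ennreal (c * (A * (F \<omega> / \<alpha>c) + B + C * R \<omega>))"
      by (rule ennreal_leI)
    also have "\<dots> = ennreal c * ((ennreal A * ennreal (F \<omega> / \<alpha>c) + ennreal B) + ennreal C * ennreal (R \<omega>))"
    proof -
      have h: "0 \<le> F \<omega> / \<alpha>c" "0 \<le> A * (F \<omega> / \<alpha>c)" "0 \<le> C * R \<omega>"
        "0 \<le> A * (F \<omega> / \<alpha>c) + B"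
        using ABC F0[of \<omega>] R0[of \<omega>] assms(6) by auto
      show ?thesis using ABC R0[of \<omega>] h
        by (simp only: ennreal_plus[symmetric] ennreal_mult[symmetric])
    qed
    finally show "ennreal (g (x \<omega>) powr p) \<le> ennreal c * ((ennreal A * ennreal (F \<omega> / \<alpha>c) + ennreal B) + ennreal C * ennreal (R \<omega>))" .
  qed
  also have "\<dots> = ennreal c * ((ennreal A * (\<integral>\<^sup>+ \<omega>. ennreal (F \<omega> / \<alpha>c) \<partial>M) + ennreal B) + ennreal C * (\<integral>\<^sup>+ \<omega>. ennreal (R \<omega>) \<partial>M))"
    using Fm Rm
    by (simp add: nn_integral_cmult nn_integral_add P.emeasure_space_1)
  also have "\<dots> \<le> ennreal c * ((ennreal A * 1 + ennreal B) + ennreal C * ennreal \<beta>c)"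
  proof -
    have "(\<integral>\<^sup>+ \<omega>. ennreal (F \<omega> / \<alpha>c) \<partial>M) = (\<integral>\<^sup>+ \<omega>. ennreal (F \<omega>) * ennreal (1 / \<alpha>c) \<partial>M)"
      using F0 assms(6) by (simp add: ennreal_mult' divide_inverse)
    also have "\<dots> = (\<integral>\<^sup>+ \<omega>. ennreal (F \<omega>) \<partial>M) * ennreal (1 / \<alpha>c)"
      using Fm by (simp add: nn_integral_multc)
    also have "\<dots> \<le> ennreal \<alpha>c * ennreal (1 / \<alpha>c)"
      using assms(9) unfolding F_def by (intro mult_right_mono) auto
    also have "\<dots> = 1" using assms(6) by (simp add: ennreal_mult'[symmetric])
    finally have I1: "(\<integral>\<^sup>+ \<omega>. ennreal (F \<omega> / \<alpha>c) \<partial>M) \<le> 1" .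
    have I2: "(\<integral>\<^sup>+ \<omega>. ennreal (R \<omega>) \<partial>M) \<le> ennreal \<beta>c" using assms(8) by (simp add: R_def)
    show ?thesis using I1 I2 by (intro mult_left_mono add_mono order_refl) auto
  qed
  also have "\<dots> = ennreal (c * (A + B + C * \<beta>c))"
  proof -
    have h: "0 \<le> C * \<beta>c" "0 \<le> A + B" "0 \<le> A * 1" "0 \<le> (1::real)" "0 \<le> A * 1 + B" "0 \<le> \<beta>c"
      using ABC assms(7) by auto
    have "ennreal c * ((ennreal A * 1 + ennreal B) + ennreal C * ennreal \<beta>c)
        = ennreal c * ((ennreal A * ennreal 1 + ennreal B) + ennreal C * ennreal \<beta>c)" by simp
    also have "\<dots> = ennreal (c * ((A * 1 + B) + C * \<beta>c))"
      using ABC h by (simp only: ennreal_plus[symmetric] ennreal_mult[symmetric])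
    finally show ?thesis by simp
  qed
  also have "A + B + C * \<beta>c = 1 + s"
    using s0 assms(7) by (simp add: A_def B_def C_def s_def field_simps power2_eq_square)
  finally show ?thesis by (simp add: kK p_def c_def s_def mult.commute)
qed

end
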